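(* Let $|\psi_{{\sf A}{\sf B}}\rangle\in\mathbb C^{d_{\sf A}}\otimes\mathbb C^{d_{\sf B}}$ be a unit vector, $\rho_{\sf A}=\mathrm{tr}_{\sf B}(|\psi_{{\sf A}{\sf B}}\rangle\langle\psi_{{\sf A}{\sf B}}|)$, and $\bar\omega_{\sf A}=\mathrm{tr}_{\sf B}\big(S_{\sf B}|\psi_{{\sf A}{\sf B}}\rangle\langle\psi_{{\sf A}{\sf B}}|^{\otimes2}\big)+\frac{S_{\sf A}}{\mathrm{tr}S_{\sf A}}\,\mathrm{tr}\big(A_{\sf A}A_{\sf B}|\psi_{{\sf A}{\sf B}}\rangle\langle\psi_{{\sf A}{\sf B}}|^{\otimes2}\big)$. Then $\bar\omega_{\sf A}=S_{\sf A}(\rho_{\sf A}\otimes\rho_{\sf A})S_{\sf A}+\big(1-\mathrm{tr}(S_{\sf A}(\rho_{\sf A}\otimes\rho_{\sf A})S_{\sf A})\big)\tilde S_{\sf A}$.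
   Context: $|\psi_{{\sf A}{\sf B}}\rangle^{\otimes2}$ is regarded as a vector in $\mathbb C^{d_{\sf A}}_1\otimes\mathbb C^{d_{\sf B}}_2\otimes\mathbb C^{d_{\sf A}}_3\otimes\mathbb C^{d_{\sf B}}_4$; $\mathrm{tr}_{\sf B}$ is the partial trace over factors $2,4$. $S_{\sf A}$, $A_{\sf A}$ are the projectors onto the symmetric and antisymmetric subspaces of $\mathbb C^{d_{\sf A}}_1\otimes\mathbb C^{d_{\sf A}}_3$; $S_{\sf B}$, $A_{\sf B}$ those of $\mathbb C^{d_{\sf B}}_2\otimes\mathbb C^{d_{\sf B}}_4$ (extended by identities where needed); $\tilde S_{\sf A}=S_{\sf A}/\mathrm{tr}S_{\sf A}$. *)

theory Defs
  imports Complex_Main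
begin

text \<open>The Hilbert space
  C^d is represented by functions from a finite index type to complex;
  operators are represented by their matrix entries (functions of row and
  column index).  The factor C^{dA} has index type 'a (dA = CARD('a)),
  C^{dB} has index type 'b.  The four-fold tensor space 1 (x) 2 (x) 3 (x) 4 =
  A (x) B (x) A (x) B has index type 'a \<times> 'b \<times> 'a \<times> 'b.\<close>

type_synonym ('i) op = "'i \<Rightarrow> 'i \<Rightarrow> complex"

definition op_mult :: "('i::finite) op \<Rightarrow> 'i op \<Rightarrow> 'i op" where
  "op_mult M N = (\<lambda>p q. \<Sum>r\<in>UNIV. M p r * N r q)"

definition op_trace :: "('i::finite) op \<Rightarrow> complex" where
  "op_trace M = (\<Sum>p\<in>UNIV. M p p)"

definition op_add :: "'i op \<Rightarrow> 'i op \<Rightarrow> 'i op" where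
  "op_add M N = (\<lambda>p q. M p q + N p q)"

definition op_scale :: "complex \<Rightarrow> 'i op \<Rightarrow> 'i op" where
  "op_scale c M = (\<lambda>p q. c * M p q)"

definition ketbra :: "('i \<Rightarrow> complex) \<Rightarrow> 'i op" where
  "ketbra v = (\<lambda>p q. v p * cnj (v q))"

definition op_tensor :: "'a op \<Rightarrow> 'a op \<Rightarrow> ('a \<times> 'a) op" where
  "op_tensor M N = (\<lambda>(i, j) (k, l). M i k * N j l)"

definition sym_proj :: "('a \<times> 'a) op" where
  "sym_proj = (\<lambda>(i, j) (k, l).
     ((if i = k \<and> j = l then 1 else 0) + (if i = l \<and> j = k then 1 else 0)) / 2)"

definition antisym_proj :: "('a \<times> 'a) op" where
  "antisym_proj = (\<lambda>(i, j) (k, l).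
     ((if i = k \<and> j = l then 1 else 0) - (if i = l \<and> j = k then 1 else 0)) / 2)"

definition ket_sq :: "('a \<times> 'b \<Rightarrow> complex) \<Rightarrow> ('a \<times> 'b \<times> 'a \<times> 'b) \<Rightarrow> complex" where
  "ket_sq \<psi> = (\<lambda>(a1, b2, a3, b4). \<psi> (a1, b2) * \<psi> (a3, b4))"

definition lift_A :: "('a \<times> 'a) op \<Rightarrow> ('a \<times> 'b \<times> 'a \<times> 'b) op" where
  "lift_A M = (\<lambda>(a1, b2, a3, b4) (a1', b2', a3', b4').
     (if b2 = b2' \<and> b4 = b4' then M (a1, a3) (a1', a3') else 0))"

definition lift_B :: "('b \<times> 'b) op \<Rightarrow> ('a \<times> 'b \<times> 'a \<times> 'b) op" where
  "lift_B M = (\<lambda>(a1, b2, a3, b4) (a1', b2', a3', b4').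
     (if a1 = a1' \<and> a3 = a3' then M (b2, b4) (b2', b4') else 0))"

definition ptrace_B24 :: "('a \<times> ('b::finite) \<times> 'a \<times> 'b) op \<Rightarrow> ('a \<times> 'a) op" where
  "ptrace_B24 X = (\<lambda>(a1, a3) (a1', a3'). \<Sum>b2\<in>UNIV. \<Sum>b4\<in>UNIV. X (a1, b2, a3, b4) (a1', b2, a3', b4))"

definition ptrace_B :: "('a \<times> ('b::finite)) op \<Rightarrow> 'a op" where
  "ptrace_B X = (\<lambda>a a'. \<Sum>b\<in>UNIV. X (a, b) (a', b))"

end

theory Submission
  imports Defs
begin
lemma sum_UNIV_pair: "(\<Sum>p\<in>(UNIV::('x::finite\<times>'y::finite) set). f p) = (\<Sum>x\<in>UNIV. \<Sum>y\<in>UNIV. f (x,y))"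
  by (subst UNIV_Times_UNIV[symmetric], subst sum.cartesian_product) (simp add: case_prod_unfold)

lemma if_conj0: "(if A \<and> B then x else (0::complex)) = (if A then if B then x else 0 else 0)" by simp
lemma sum_if_pull: "(\<Sum>y\<in>A. if P then f y else (0::complex)) = (if P then sum f A else 0)" by simp

lemma first: fixes \<psi> :: "'a::finite \<times> 'b::finite \<Rightarrow> complex"
  shows "ptrace_B24 (op_mult (lift_B (sym_proj :: ('b \<times> 'b) op)) (ketbra (ket_sq \<psi>))) (a1,a3) (c1,c3)
   = (ptrace_B (ketbra \<psi>) a1 c1 * ptrace_B (ketbra \<psi>) a3 c3 + ptrace_B (ketbra \<psi>) a1 c3 * ptrace_B (ketbra \<psi>) a3 c1)/2"
  apply (simp add: ptrace_B24_def op_mult_def lift_B_def sym_proj_def ketbra_def ket_sq_def ptrace_B_def sum_UNIV_pair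
     if_conj0 if_distrib[where f="\<lambda>x. x * _"] if_distrib[where f="\<lambda>x. _ * x"] sum_if_pull if_distrib[where f="\<lambda>x. x / _"] ring_distribs sum.distrib sum_divide_distrib add_divide_distrib sum_product cong: if_cong)
  apply (rule arg_cong2[where f="(+)"])
   apply (simp add: mult_ac)
  apply (subst sum.swap)
  apply (simp add: mult_ac)
  done

lemma second: fixes r :: "'a::finite op"
  shows "op_mult (op_mult sym_proj (op_tensor r r)) sym_proj (a1,a3) (c1,c3) = (r a1 c1 * r a3 c3 + r a1 c3 * r a3 c1)/2"
  apply (simp add: op_mult_def op_tensor_def sym_proj_def sum_UNIV_pair
     if_conj0 if_distrib[where f="\<lambda>x. x * _"] if_distrib[where f="\<lambda>x. _ * x"] sum_if_pull if_distrib[where f="\<lambda>x. x / _"] ring_distribs sum.distrib sum_divide_distrib add_divide_distrib cong: if_cong)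
  done

lemma eqsym: "(x = y \<and> y = x) = (x = y)" by auto
lemma trS: "op_trace (sym_proj :: ('a::finite \<times> 'a) op) = (of_nat (card (UNIV::'a set))^2 + of_nat (card (UNIV::'a set)))/2"
proof -
  have "op_trace (sym_proj :: ('a \<times> 'a) op) = (\<Sum>x\<in>(UNIV::'a set). \<Sum>y\<in>(UNIV::'a set). 1/2 + (if x = y then 1 else 0)/2)"
    by (simp add: op_trace_def sym_proj_def sum_UNIV_pair add_divide_distrib eqsym)
  also have "\<dots> = (of_nat (card (UNIV::'a set))^2 + of_nat (card (UNIV::'a set)))/2"
    by (simp add: sum.distrib power2_eq_square sum_divide_distrib[symmetric] algebra_simps)
  finally show ?thesis .
qed

lemma trSTS: fixes r :: "'a::finite op"
  shows "op_trace (op_mult (op_mult sym_proj (op_tensor r r)) sym_proj) = ((\<Sum>a\<in>UNIV. r a a)^2 + (\<Sum>a\<in>UNIV. \<Sum>c\<in>UNIV. r a c * r c a))/2"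
  apply (simp add: op_trace_def sum_UNIV_pair second sum.distrib sum_divide_distrib add_divide_distrib power2_eq_square sum_product)
  done

lemma swap3: "(\<Sum>b\<in>(UNIV::'b::finite set). \<Sum>c\<in>(UNIV::'c::finite set). \<Sum>d\<in>(UNIV::'d::finite set). g b c d)
   = (\<Sum>d\<in>UNIV. \<Sum>b\<in>UNIV. \<Sum>c\<in>UNIV. g b c d)"
proof -
  have "(\<Sum>b\<in>(UNIV::'b set). \<Sum>c\<in>(UNIV::'c set). \<Sum>d\<in>(UNIV::'d set). g b c d) = (\<Sum>b\<in>(UNIV::'b set). \<Sum>d\<in>(UNIV::'d set). \<Sum>c\<in>(UNIV::'c set). g b c d)"
    by (rule sum.cong[OF refl], rule sum.swap)
  also have "\<dots> = (\<Sum>d\<in>UNIV. \<Sum>b\<in>UNIV. \<Sum>c\<in>UNIV. g b c d)" by (rule sum.swap)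
  finally show ?thesis .
qed

lemma Xeq: fixes \<psi> :: "'a::finite \<times> 'b::finite \<Rightarrow> complex"
  shows "(\<Sum>a\<in>UNIV. \<Sum>c\<in>UNIV. ptrace_B (ketbra \<psi>) a c * ptrace_B (ketbra \<psi>) c a)
   = (\<Sum>x\<in>UNIV. \<Sum>xa\<in>UNIV. \<Sum>xb\<in>UNIV. \<Sum>y\<in>UNIV. \<psi>(xb,xa)*\<psi>(x,y)*(cnj (\<psi>(x,xa))*cnj (\<psi>(xb,y))))"
  apply (simp add: ptrace_B_def ketbra_def sum_product)
  apply (rule sum.cong[OF refl])
  apply (subst swap3)
  apply (simp add: mult_ac)
  done

lemma Nsq: fixes \<psi> :: "'a::finite \<times> 'b::finite \<Rightarrow> complex"
  shows "(\<Sum>p\<in>UNIV. \<psi> p * cnj (\<psi> p))^2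
   = (\<Sum>x\<in>UNIV. \<Sum>xa\<in>UNIV. \<Sum>xb\<in>UNIV. \<Sum>y\<in>UNIV. \<psi>(x,xa)*\<psi>(xb,y)*(cnj (\<psi>(x,xa))*cnj (\<psi>(xb,y))))"
  unfolding power2_eq_square sum_product by (simp add: sum_UNIV_pair mult_ac)

lemma trAAP: fixes \<psi> :: "'a::finite \<times> 'b::finite \<Rightarrow> complex"
  shows "op_trace (op_mult (op_mult (lift_A (antisym_proj :: ('a \<times> 'a) op)) (lift_B (antisym_proj :: ('b \<times> 'b) op))) (ketbra (ket_sq \<psi>)))
   = ((\<Sum>p\<in>UNIV. \<psi> p * cnj (\<psi> p))^2 - (\<Sum>a\<in>UNIV. \<Sum>c\<in>UNIV. ptrace_B (ketbra \<psi>) a c * ptrace_B (ketbra \<psi>) c a))/2"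
  unfolding Xeq Nsq
  apply (simp add: op_trace_def op_mult_def lift_A_def lift_B_def antisym_proj_def ketbra_def ket_sq_def sum_UNIV_pair
     if_conj0 if_distrib[where f="\<lambda>x. x * _"] if_distrib[where f="\<lambda>x. _ * x"] sum_if_pull if_distrib[where f="\<lambda>x. x / _"] ring_distribs sum.distrib sum_subtractf sum_divide_distrib add_divide_distrib diff_divide_distrib cong: if_cong)
  apply (simp add: mult_ac)
  apply (simp only: sum_divide_distrib[symmetric])
  apply simp
  done

theorem mainTheorem9:
  fixes \<psi> :: "'a::finite \<times> 'b::finite \<Rightarrow> complex"
  assumes unit: "(\<Sum>p\<in>UNIV. (cmod (\<psi> p))\<^sup>2) = 1"
  defines "\<rho>A \<equiv> ptrace_B (ketbra \<psi>)"
    and "SA \<equiv> (sym_proj :: ('a \<times> 'a) op)"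
    and "AA \<equiv> (antisym_proj :: ('a \<times> 'a) op)"
    and "SB \<equiv> (sym_proj :: ('b \<times> 'b) op)"
    and "AB \<equiv> (antisym_proj :: ('b \<times> 'b) op)"
    and "P \<equiv> ketbra (ket_sq \<psi>)"
  defines "\<omega> \<equiv> op_add (ptrace_B24 (op_mult (lift_B SB) P))
                  (op_scale (op_trace (op_mult (op_mult (lift_A AA) (lift_B AB)) P) / op_trace SA) SA)"
  shows "\<omega> = op_add (op_mult (op_mult SA (op_tensor \<rho>A \<rho>A)) SA)
                   (op_scale ((1 - op_trace (op_mult (op_mult SA (op_tensor \<rho>A \<rho>A)) SA)) / op_trace SA) SA)"
proof -
  have N1: "(\<Sum>p\<in>UNIV. \<psi> p * cnj (\<psi> p)) = 1"
  proof -
    have "(\<Sum>p\<in>UNIV. \<psi> p * cnj (\<psi> p)) = (\<Sum>p\<in>UNIV. complex_of_real ((cmod (\<psi> p))\<^sup>2))"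
      by (simp only: complex_norm_square)
    also have "\<dots> = complex_of_real (\<Sum>p\<in>UNIV. (cmod (\<psi> p))\<^sup>2)" by simp
    finally show ?thesis using unit by simp
  qed
  have trr: "(\<Sum>a\<in>UNIV. \<rho>A a a) = 1"
    using N1 by (simp add: \<rho>A_def ptrace_B_def ketbra_def sum_UNIV_pair)
  define X where "X = (\<Sum>a\<in>UNIV. \<Sum>c\<in>UNIV. \<rho>A a c * \<rho>A c a)"
  have t1: "op_trace (op_mult (op_mult (lift_A AA) (lift_B AB)) P) = (1 - X)/2"
    unfolding AA_def AB_def P_def X_def \<rho>A_def trAAP N1 by simp
  have t2: "op_trace (op_mult (op_mult SA (op_tensor \<rho>A \<rho>A)) SA) = (1 + X)/2"
    unfolding SA_def X_def trSTS trr by simp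
  have e: "(1 - X)/2 = 1 - (1 + X)/2" by (simp add: field_simps)
  show ?thesis
  proof (rule ext, rule ext)
    fix p q :: "'a \<times> 'a"
    obtain a1 a3 where p: "p = (a1,a3)" by (cases p)
    obtain c1 c3 where q: "q = (c1,c3)" by (cases q)
    show "\<omega> p q = op_add (op_mult (op_mult SA (op_tensor \<rho>A \<rho>A)) SA)
                   (op_scale ((1 - op_trace (op_mult (op_mult SA (op_tensor \<rho>A \<rho>A)) SA)) / op_trace SA) SA) p q"
      unfolding \<omega>_def op_add_def op_scale_def p q t1 t2 e
      unfolding SB_def P_def first SA_def second \<rho>A_def by simp
  qed
qed
end
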